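(* Let $f:\mathbb{T}^2\to\mathbb{T}^2$ be an area preserving endomorphism. Then the following are equivalent: (1) $f$ is not transitive; (2) there exist non-empty regular open sets $U,V\subset\mathbb{T}^2$ with $U=\mathbb{T}^2\setminus\overline{V}$ (equivalently $V=\mathbb{T}^2\setminus\overline{U}$) such that $f^{-1}(U)=U$ and $f^{-1}(V)=V$.
   Context: $\mathbb{T}^2=\mathbb{R}^2/\mathbb{Z}^2$ with Haar measure $\lambda$. An endomorphism is a local homeomorphism $f:\mathbb{T}^2\to\mathbb{T}^2$; it is area preserving if $\lambda(f^{-1}(B))=\lambda(B)$ for all Borel $B$. $f$ is transitive if some point has dense forward orbit $\{f^n(x):n\ge0\}$. An open set is regular if it equals the interior of its closure. *)

theory Defs
  imports "HOL-Analysis.Analysis"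
begin

text \<open>The torus R^2/Z^2, realised as the product of two unit circles in C x C,
 with the subspace topology.\<close>
definition torus :: "(complex \<times> complex) set" where
  "torus = sphere 0 1 \<times> sphere 0 1"

abbreviation torus_top :: "(complex \<times> complex) topology" where
  "torus_top \<equiv> top_of_set torus"

definition torus_proj :: "real \<times> real \<Rightarrow> complex \<times> complex" where
  "torus_proj = (\<lambda>(s, t). (cis (2 * pi * s), cis (2 * pi * t)))"

text \<open>Haar (normalised Lebesgue) measure on the torus: push-forward of Lebesgue
 measure on the fundamental domain [0,1)^2.\<close>
definition haar_torus :: "(complex \<times> complex) measure" where
  "haar_torus = distr (restrict_space lborel ({0..<1} \<times> {0..<1}))
                      (restrict_space borel torus) torus_proj"

text \<open>Endomorphism: a local homeomorphism of the torus.\<close>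
definition torus_endomorphism :: "(complex \<times> complex \<Rightarrow> complex \<times> complex) \<Rightarrow> bool" where
  "torus_endomorphism f \<longleftrightarrow> f ` torus \<subseteq> torus \<and>
     (\<forall>x\<in>torus. \<exists>W. openin torus_top W \<and> x \<in> W \<and> openin torus_top (f ` W) \<and>
        homeomorphic_map (subtopology torus_top W) (subtopology torus_top (f ` W)) f)"

definition area_preserving :: "(complex \<times> complex \<Rightarrow> complex \<times> complex) \<Rightarrow> bool" where
  "area_preserving f \<longleftrightarrow>
     (\<forall>B \<in> sets haar_torus. emeasure haar_torus (f -` B \<inter> torus) = emeasure haar_torus B)"

definition torus_transitive :: "(complex \<times> complex \<Rightarrow> complex \<times> complex) \<Rightarrow> bool" where
  "torus_transitive f \<longleftrightarrow> (\<exists>x\<in>torus. torus \<subseteq> closure (range (\<lambda>n. (f ^^ n) x)))"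

definition regular_open :: "(complex \<times> complex) set \<Rightarrow> bool" where
  "regular_open U \<longleftrightarrow> openin torus_top U \<and>
     U = torus_top interior_of (torus_top closure_of U)"

end

theory Submission
  imports Defs
begin

lemma cont_iter: "continuous_map X X f \<Longrightarrow> continuous_map X X (f ^^ n)"
  by (induction n) (auto intro: continuous_map_compose)

lemma abstract_part:
  fixes X :: "'a topology"
  assumes cont: "continuous_map X X f"
    and omap: "\<And>A. openin X A \<Longrightarrow> openin X (f ` A)"
    and P: "\<And>W. openin X W \<Longrightarrow> {x\<in>topspace X. f x \<in> W} \<subseteq> W \<Longrightarrow> W \<subseteq> X closure_of {x\<in>topspace X. f x \<in> W}"
    and U0: "openin X U0" "U0 \<noteq> {}" and V0: "openin X V0" "V0 \<noteq> {}"
    and wand: "\<And>n x. x \<in> V0 \<Longrightarrow> (f^^n) x \<notin> U0"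
  shows "\<exists>U V. U \<noteq> {} \<and> V \<noteq> {} \<and> openin X U \<and> U = X interior_of (X closure_of U)
     \<and> openin X V \<and> V = X interior_of (X closure_of V) \<and> U = topspace X - X closure_of V
     \<and> {x\<in>topspace X. f x \<in> U} = U \<and> {x\<in>topspace X. f x \<in> V} = V"
proof -
  have ftop: "f x \<in> topspace X" if "x \<in> topspace X" for x
    using cont that by (simp add: continuous_map_def Pi_iff)
  define W where "W = (\<Union>n. {x\<in>topspace X. (f^^n) x \<in> U0})"
  have Wo: "openin X W" unfolding W_def
    by (intro openin_Union) (auto intro: openin_continuous_map_preimage[OF cont_iter[OF cont] U0(1)])
  have WW: "{x\<in>topspace X. f x \<in> W} \<subseteq> W"
  proof
    fix x assume "x \<in> {x\<in>topspace X. f x \<in> W}"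
    then obtain n where "x \<in> topspace X" "(f^^n) (f x) \<in> U0" unfolding W_def by auto
    then have "(f^^(Suc n)) x \<in> U0" by (simp add: funpow_Suc_right del: funpow.simps)
    then show "x \<in> W" using \<open>x \<in> topspace X\<close> unfolding W_def by blast
  qed
  define C where "C = X closure_of W"
  have Cc: "closedin X C" unfolding C_def by simp
  have Ctop: "C \<subseteq> topspace X" using Cc closedin_subset by blast
  have pre_sub: "{x\<in>topspace X. f x \<in> C} \<subseteq> X closure_of {x\<in>topspace X. f x \<in> W}"
  proof
    fix x assume x: "x \<in> {x\<in>topspace X. f x \<in> C}"
    show "x \<in> X closure_of {x\<in>topspace X. f x \<in> W}"
      unfolding in_closure_of
    proof (intro conjI allI impI)
      show "x \<in> topspace X" using x by simp
      fix T assume T: "x \<in> T \<and> openin X T"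
      have "openin X (f ` T)" using omap T by blast
      moreover have "f x \<in> f ` T" using T by blast
      moreover have "f x \<in> X closure_of W" using x C_def by simp
      ultimately obtain w where "w \<in> W" "w \<in> f ` T"
        unfolding in_closure_of by blast
      then obtain y where "y \<in> T" "f y = w" by blast
      moreover have "y \<in> topspace X" using T \<open>y \<in> T\<close> openin_subset by blast
      ultimately show "\<exists>y. y \<in> {x \<in> topspace X. f x \<in> W} \<and> y \<in> T"
        using \<open>w \<in> W\<close> by blast
    qed
  qed
  have CpreC: "{x\<in>topspace X. f x \<in> C} = C"
  proof
    show "{x\<in>topspace X. f x \<in> C} \<subseteq> C"
      using pre_sub WW C_def closure_of_mono by blast
    have "closedin X {x\<in>topspace X. f x \<in> C}"
      using closedin_continuous_map_preimage[OF cont Cc] .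
    moreover have "{x\<in>topspace X. f x \<in> W} \<subseteq> {x\<in>topspace X. f x \<in> C}"
      using closure_of_subset[of W X] Wo openin_subset unfolding C_def by blast
    ultimately have "X closure_of {x\<in>topspace X. f x \<in> W} \<subseteq> {x\<in>topspace X. f x \<in> C}"
      by (simp add: closure_of_minimal)
    moreover have "C \<subseteq> X closure_of {x\<in>topspace X. f x \<in> W}"
      using P[OF Wo WW] unfolding C_def
      by (metis closure_of_closure_of closure_of_mono)
    ultimately show "C \<subseteq> {x\<in>topspace X. f x \<in> C}" by blast
  qed
  define U where "U = X interior_of C"
  define V where "V = topspace X - C"
  have Uo: "openin X U" unfolding U_def by simp
  have Vo: "openin X V" unfolding V_def using Cc by blast
  have WU: "W \<subseteq> U" unfolding U_def C_def
    by (rule interior_of_maximal) (use Wo closure_of_subset[of W X] openin_subset[OF Wo] in auto)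
  have U0W: "U0 \<subseteq> W" unfolding W_def using openin_subset[OF U0(1)]
    by (auto intro!: exI[of _ 0])
  have clV: "X closure_of V = topspace X - U"
    unfolding V_def U_def by (rule closure_of_complement)
  have clintC: "X closure_of U = C"
  proof
    show "X closure_of U \<subseteq> C" unfolding U_def
      using Cc by (simp add: closure_of_minimal interior_of_subset)
    show "C \<subseteq> X closure_of U" unfolding C_def using WU closure_of_mono by blast
  qed
  have "U \<noteq> {}" using U0 U0W WU by blast
  moreover have "V \<noteq> {}"
  proof -
    have "V0 \<inter> W = {}"
    proof (rule ccontr)
      assume "V0 \<inter> W \<noteq> {}"
      then obtain x n where "x \<in> V0" "(f^^n) x \<in> U0" unfolding W_def by blast
      then show False using wand by blast
    qed
    then have "V0 \<inter> C = {}" unfolding C_def using openin_Int_closure_of_eq_empty[OF V0(1)] by blast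
    then have "V0 \<subseteq> V" unfolding V_def using V0 openin_subset by blast
    then show ?thesis using V0 by blast
  qed
  moreover have "U = X interior_of (X closure_of U)" using clintC U_def by simp
  moreover have "V = X interior_of (X closure_of V)"
    unfolding clV U_def using interior_of_complement[of X "X interior_of C"] clintC[unfolded U_def]
    V_def by simp
  moreover have "U = topspace X - X closure_of V"
    unfolding clV using Uo openin_subset by blast
  moreover have "{x\<in>topspace X. f x \<in> V} = V"
    unfolding V_def using CpreC ftop by blast
  moreover have "{x\<in>topspace X. f x \<in> U} = U"
  proof
    have "openin X {x\<in>topspace X. f x \<in> U}"
      using openin_continuous_map_preimage[OF cont Uo] .
    moreover have "{x\<in>topspace X. f x \<in> U} \<subseteq> C"
      using CpreC interior_of_subset[of X C] unfolding U_def by blast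
    ultimately show "{x\<in>topspace X. f x \<in> U} \<subseteq> U" unfolding U_def
      by (simp add: interior_of_maximal)
    have "f ` U \<subseteq> U" unfolding U_def
    proof (rule interior_of_maximal)
      show "openin X (f ` (X interior_of C))" using omap by simp
      show "f ` (X interior_of C) \<subseteq> C"
        using CpreC interior_of_subset[of X C] by blast
    qed
    then show "U \<subseteq> {x\<in>topspace X. f x \<in> U}" using Uo openin_subset by blast
  qed
  ultimately show ?thesis using Uo Vo by (intro exI[of _ U] exI[of _ V] conjI) assumption+
qed

lemma endo_cont:
  assumes "torus_endomorphism f"
  shows "continuous_map torus_top torus_top f"
  unfolding continuous_map_def
proof (intro conjI allI impI)
  show "f \<in> topspace torus_top \<rightarrow> topspace torus_top"
    using assms unfolding torus_endomorphism_def by auto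
  fix Q assume Q: "openin torus_top Q"
  show "openin torus_top {x \<in> topspace torus_top. f x \<in> Q}"
  proof (subst openin_subopen, intro ballI)
    fix x assume x: "x \<in> {x \<in> topspace torus_top. f x \<in> Q}"
    then obtain W where W: "openin torus_top W" "x \<in> W" "openin torus_top (f ` W)"
      "homeomorphic_map (subtopology torus_top W) (subtopology torus_top (f ` W)) f"
      using assms unfolding torus_endomorphism_def by auto
    have c: "continuous_map (subtopology torus_top W) (subtopology torus_top (f ` W)) f"
      using W(4) homeomorphic_imp_continuous_map by blast
    have "openin (subtopology torus_top (f ` W)) (Q \<inter> f ` W)"
      using Q openin_subtopology_Int by blast
    then have "openin (subtopology torus_top W) {y \<in> topspace (subtopology torus_top W). f y \<in> Q \<inter> f ` W}"
      using openin_continuous_map_preimage[OF c] by blast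
    then have o: "openin torus_top {y \<in> topspace (subtopology torus_top W). f y \<in> Q \<inter> f ` W}"
      using openin_trans_full W(1) by blast
    have "{y \<in> topspace (subtopology torus_top W). f y \<in> Q \<inter> f ` W} \<subseteq> {x \<in> topspace torus_top. f x \<in> Q}"
      by auto
    moreover have "x \<in> {y \<in> topspace (subtopology torus_top W). f y \<in> Q \<inter> f ` W}"
      using x W(1,2) openin_subset by fastforce
    ultimately show "\<exists>T. openin torus_top T \<and> x \<in> T \<and> T \<subseteq> {x \<in> topspace torus_top. f x \<in> Q}"
      using o by blast
  qed
qed

lemma endo_open:
  assumes "torus_endomorphism f" "openin torus_top A"
  shows "openin torus_top (f ` A)"
proof (subst openin_subopen, intro ballI)
  fix y assume "y \<in> f ` A"
  then obtain x where x: "x \<in> A" "y = f x" by blast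
  have "x \<in> torus" using x assms(2) openin_subset by fastforce
  then obtain W where W: "openin torus_top W" "x \<in> W" "openin torus_top (f ` W)"
      "homeomorphic_map (subtopology torus_top W) (subtopology torus_top (f ` W)) f"
      using assms unfolding torus_endomorphism_def by auto
  have om: "open_map (subtopology torus_top W) (subtopology torus_top (f ` W)) f"
    using W(4) homeomorphic_imp_open_map by blast
  have "openin (subtopology torus_top W) (A \<inter> W)"
    using assms(2) openin_subtopology_Int by blast
  then have "openin (subtopology torus_top (f ` W)) (f ` (A \<inter> W))"
    using om unfolding open_map_def by blast
  then have "openin torus_top (f ` (A \<inter> W))" using openin_trans_full W(3) by blast
  moreover have "y \<in> f ` (A \<inter> W)" using x W by blast
  ultimately show "\<exists>T. openin torus_top T \<and> y \<in> T \<and> T \<subseteq> f ` A" by blast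
qed

lemma torus_proj_in: "torus_proj x \<in> torus"
  by (cases x) (simp add: torus_proj_def torus_def)

lemma torus_proj_cont: "continuous_on UNIV torus_proj"
  unfolding torus_proj_def case_prod_beta by (intro continuous_intros)

lemma box01_sets: "{0..<1::real} \<times> {0..<1::real} \<in> sets lborel"
proof -
  have "{0..<1::real} \<times> {0..<1::real} = ({0..1} \<times> {0..1}) \<inter> ({..<1} \<times> {..<1})" by auto
  moreover have "({0..1::real} \<times> {0..1::real}) \<in> sets borel"
    by (intro borel_closed closed_Times) auto
  moreover have "({..<1::real} \<times> {..<1::real}) \<in> sets borel"
    by (intro borel_open open_Times) auto
  ultimately show ?thesis by simp
qed

lemma torus_proj_meas:
  "torus_proj \<in> measurable (restrict_space lborel ({0..<1} \<times> {0..<1})) (restrict_space borel torus)"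
proof (rule measurable_restrict_space2)
  show "torus_proj \<in> space (restrict_space lborel ({0..<1} \<times> {0..<1})) \<rightarrow> torus"
    using torus_proj_in by auto
  have "torus_proj \<in> borel_measurable borel"
    using torus_proj_cont by (rule borel_measurable_continuous_onI)
  then have "torus_proj \<in> borel_measurable lborel" by simp
  then show "torus_proj \<in> borel_measurable (restrict_space lborel ({0..<1} \<times> {0..<1}))"
    by (rule measurable_restrict_space1)
qed

lemma haar_emeasure:
  assumes "A \<in> sets (restrict_space borel torus)"
  shows "emeasure haar_torus A = emeasure lborel (torus_proj -` A \<inter> ({0..<1} \<times> {0..<1}))"
proof -
  have "emeasure haar_torus A = emeasure (restrict_space lborel ({0..<1} \<times> {0..<1}))
      (torus_proj -` A \<inter> space (restrict_space lborel ({0..<1} \<times> {0..<1})))"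
    unfolding haar_torus_def using emeasure_distr[OF torus_proj_meas assms] by simp
  also have "\<dots> = emeasure lborel (torus_proj -` A \<inter> ({0..<1} \<times> {0..<1}))"
    by (subst emeasure_restrict_space) (use box01_sets in auto)
  finally show ?thesis .
qed

lemma haar_sets: "sets haar_torus = sets (restrict_space borel torus)"
  unfolding haar_torus_def by simp

lemma openin_sets: "openin torus_top A \<Longrightarrow> A \<in> sets haar_torus"
  unfolding haar_sets sets_restrict_space openin_open
  by (auto simp: borel_open)

lemma haar_finite: "A \<in> sets haar_torus \<Longrightarrow> emeasure haar_torus A \<noteq> \<infinity>"
proof -
  assume "A \<in> sets haar_torus"
  then have "emeasure haar_torus A = emeasure lborel (torus_proj -` A \<inter> ({0..<1} \<times> {0..<1}))"
    using haar_emeasure haar_sets by simp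
  also have "\<dots> \<le> emeasure lborel (cbox (0::real,0::real) (1,1))"
    by (rule emeasure_mono) (auto simp: cbox_Pair_eq intro!: borel_closed closed_Times)
  also have "\<dots> < \<infinity>" by (rule emeasure_lborel_cbox_finite)
  finally show ?thesis by simp
qed

lemma torus_surj:
  assumes "p \<in> torus"
  shows "\<exists>s t. 0 \<le> s \<and> s < 1 \<and> 0 \<le> t \<and> t < 1 \<and> torus_proj (s, t) = p"
proof -
  obtain a b where p: "p = (a, b)" "norm a = 1" "norm b = 1"
    using assms unfolding torus_def by (cases p) auto
  have ca: "cis (2 * pi * (Arg2pi a / (2*pi))) = a"
    using complex_norm_eq_1_exp[of a] p(2) by (simp add: cis_conv_exp)
  have cb: "cis (2 * pi * (Arg2pi b / (2*pi))) = b"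
    using complex_norm_eq_1_exp[of b] p(3) by (simp add: cis_conv_exp)
  show ?thesis
    apply (rule exI[of _ "Arg2pi a / (2*pi)"], rule exI[of _ "Arg2pi b / (2*pi)"])
    using Arg2pi[of a] Arg2pi[of b] ca cb p(1)
    by (auto simp: torus_proj_def field_simps)
qed

lemma haar_pos:
  assumes "openin torus_top A" "A \<noteq> {}"
  shows "emeasure haar_torus A \<noteq> 0"
proof -
  obtain T where T: "open T" "A = torus \<inter> T" using assms(1) openin_open by blast
  obtain p where "p \<in> A" using assms(2) by blast
  then obtain s t where st: "0 \<le> s" "s < 1" "0 \<le> t" "t < 1" "torus_proj (s, t) \<in> T"
    using torus_surj T by blast
  define Q where "Q = torus_proj -` T"
  have Qo: "open Q" unfolding Q_def
    using open_vimage[OF T(1) torus_proj_cont] by simp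
  obtain e where e: "e > 0" "ball (s, t) e \<subseteq> Q"
    using Qo st(5) unfolding Q_def open_contains_ball by blast
  define d where "d = min (e/2) (min ((1-s)/2) ((1-t)/2))"
  have d1: "d \<le> (1-s)/2" "d \<le> (1-t)/2" "d \<le> e/2" unfolding d_def by (auto simp: min_def)
  have d: "d > 0" "d \<le> e/2" "s + d < 1" "t + d < 1" using e st d1 unfolding d_def by (auto simp del: min_le_iff_disj)
  have "dist (s, t) (s+d, t+d) < e"
  proof -
    have "(2*d)^2 \<le> e^2" using d e by (intro power_mono) auto
    moreover have "0 < d^2" using d by simp
    moreover have "(2*d)^2 = 4*d^2" by (simp add: power_mult_distrib)
    ultimately have "2*d^2 < e^2" by linarith
    then have "sqrt (2*d^2) < sqrt (e^2)" by (simp only: real_sqrt_less_iff)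
    then show ?thesis using e by (simp add: dist_Pair_Pair dist_real_def)
  qed
  then have qin: "(s+d, t+d) \<in> Q \<inter> ({0<..<1} \<times> {0<..<1})"
    using e d st by auto
  have "open (Q \<inter> ({0<..<1::real} \<times> {0<..<1::real}))" using Qo by (intro open_Int open_Times) auto
  then obtain r where r: "r > 0" "ball (s+d, t+d) r \<subseteq> Q \<inter> ({0<..<1} \<times> {0<..<1})"
    using qin open_contains_ball by blast
  have "0 < emeasure lborel (ball (s+d, t+d) r)"
    using r by (simp add: emeasure_ball)
  also have "\<dots> \<le> emeasure lborel (torus_proj -` A \<inter> ({0..<1} \<times> {0..<1}))"
  proof (rule emeasure_mono)
    have AQ: "torus_proj -` A = Q" unfolding Q_def T(2) using torus_proj_in by auto
    show "ball (s + d, t + d) r \<subseteq> torus_proj -` A \<inter> {0..<1} \<times> {0..<1}"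
      unfolding AQ using r(2) by auto
    show "torus_proj -` A \<inter> {0..<1} \<times> {0..<1} \<in> sets lborel"
      unfolding AQ using box01_sets Qo by (simp add: borel_open)
  qed
  also have "\<dots> = emeasure haar_torus A"
    using haar_emeasure[of A] openin_sets[OF assms(1)] haar_sets by simp
  finally show ?thesis by simp
qed

lemma iter_in: "torus_endomorphism f \<Longrightarrow> x \<in> torus \<Longrightarrow> (f^^n) x \<in> torus"
  by (induction n) (auto simp: torus_endomorphism_def)

lemma measure_prop:
  assumes endo: "torus_endomorphism f" and ap: "area_preserving f"
    and W: "openin torus_top W" and sub: "{x\<in>torus. f x \<in> W} \<subseteq> W"
  shows "W \<subseteq> torus_top closure_of {x\<in>torus. f x \<in> W}"
proof -
  define Pre where "Pre = {x\<in>torus. f x \<in> W}"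
  have Po: "openin torus_top Pre" unfolding Pre_def
    using openin_continuous_map_preimage[OF endo_cont[OF endo] W] by simp
  have Ws: "W \<in> sets haar_torus" using openin_sets[OF W] .
  have Ps: "Pre \<in> sets haar_torus" using openin_sets[OF Po] .
  have "f -` W \<inter> torus = Pre" unfolding Pre_def by auto
  then have eq: "emeasure haar_torus Pre = emeasure haar_torus W"
    using ap Ws unfolding area_preserving_def by metis
  have "emeasure haar_torus (W - Pre) = emeasure haar_torus W - emeasure haar_torus Pre"
    by (rule emeasure_Diff) (use haar_finite[OF Ps] Ws Ps sub Pre_def in auto)
  then have z: "emeasure haar_torus (W - Pre) = 0" using eq haar_finite[OF Ws] by (simp add: ennreal_diff_self top_ennreal_def)
  define Q where "Q = W - torus_top closure_of Pre"
  have Qo: "openin torus_top Q" unfolding Q_def using W by (intro openin_diff) auto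
  have "Pre \<subseteq> torus_top closure_of Pre"
    using closure_of_subset[of Pre torus_top] openin_subset[OF Po] by simp
  then have QW: "Q \<subseteq> W - Pre" unfolding Q_def by blast
  have "emeasure haar_torus Q \<le> emeasure haar_torus (W - Pre)"
    by (rule emeasure_mono[OF QW]) (use Ws Ps in auto)
  then have "emeasure haar_torus Q = 0" using z by simp
  then have "Q = {}" using haar_pos[OF Qo] by blast
  then show ?thesis unfolding Q_def Pre_def by blast
qed

lemma baire_part:
  assumes endo: "torus_endomorphism f"
    and H: "\<And>U0 V0. openin torus_top U0 \<Longrightarrow> U0 \<noteq> {} \<Longrightarrow> openin torus_top V0 \<Longrightarrow> V0 \<noteq> {}
       \<Longrightarrow> \<exists>n x. x \<in> V0 \<and> (f^^n) x \<in> U0"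
  shows "torus_transitive f"
proof -
  have cont: "continuous_map torus_top torus_top f" using endo_cont[OF endo] .
  obtain \<B> :: "(complex \<times> complex) set set" where B: "countable \<B>" "\<And>C. C \<in> \<B> \<Longrightarrow> open C"
       "\<And>S. open S \<Longrightarrow> \<exists>U. U \<subseteq> \<B> \<and> S = \<Union>U"
    using univ_second_countable by blast
  define D where "D B = (if B \<inter> torus = {} then torus else {x\<in>torus. \<exists>n. (f^^n) x \<in> B})" for B
  define G where "G = insert torus (D ` \<B>)"
  have ct: "closed torus" unfolding torus_def
    by (intro compact_imp_closed compact_Times) auto
  have "torus \<subseteq> closure (\<Inter>G)"
  proof (rule Baire[OF ct])
    show "countable G" unfolding G_def using B(1) by simp
    fix T assume "T \<in> G"
    then consider "T = torus" | B where "B \<in> \<B>" "T = D B" unfolding G_def by blast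
    then show "openin torus_top T \<and> torus \<subseteq> closure T"
    proof cases
      case 1 then show ?thesis using closure_subset by auto
    next
      case 2
      show ?thesis
      proof (cases "B \<inter> torus = {}")
        case True then show ?thesis using 2 closure_subset unfolding D_def by auto
      next
        case False
        have TD: "T = {x\<in>torus. \<exists>n. (f^^n) x \<in> B}" using 2 False D_def by simp
        have "T = (\<Union>n. {x\<in>topspace torus_top. (f^^n) x \<in> torus \<inter> B})"
          unfolding TD using iter_in[OF endo] by auto
        moreover have "openin torus_top (torus \<inter> B)"
          using B(2)[OF 2(1)] by (simp add: openin_open_Int)
        moreover have "openin torus_top {x\<in>topspace torus_top. (f^^n) x \<in> torus \<inter> B}" for n
          using openin_continuous_map_preimage[OF cont_iter[OF cont] \<open>openin torus_top (torus \<inter> B)\<close>] .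
        ultimately have "openin torus_top T"
          by (metis (no_types, lifting) openin_Union imageE)
        moreover have "torus \<subseteq> closure T"
        proof
          fix y assume y: "y \<in> torus"
          show "y \<in> closure T" unfolding closure_iff_nhds_not_empty
          proof (intro allI impI)
            fix A S assume AS: "S \<subseteq> A" "open S" "y \<in> S"
            have "openin torus_top (torus \<inter> S)" using AS by (simp add: openin_open_Int)
            moreover have "openin torus_top (torus \<inter> B)"
              using B(2)[OF 2(1)] by (simp add: openin_open_Int)
            ultimately obtain n x where "x \<in> torus \<inter> S" "(f^^n) x \<in> torus \<inter> B"
              using H[of "torus \<inter> B" "torus \<inter> S"] False AS y by blast
            then have "x \<in> T \<inter> A" unfolding TD using AS by auto
            then show "T \<inter> A \<noteq> {}" by blast
          qed
        qed
        ultimately show ?thesis by blast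
      qed
    qed
  qed
  moreover have "(1,1) \<in> torus" unfolding torus_def by simp
  ultimately have "\<Inter>G \<noteq> {}" by auto
  then obtain x where x: "x \<in> \<Inter>G" by blast
  then have xt: "x \<in> torus" unfolding G_def by blast
  have "torus \<subseteq> closure (range (\<lambda>n. (f ^^ n) x))"
  proof
    fix y assume y: "y \<in> torus"
    show "y \<in> closure (range (\<lambda>n. (f ^^ n) x))" unfolding closure_iff_nhds_not_empty
    proof (intro allI impI)
      fix A S assume AS: "S \<subseteq> A" "open S" "y \<in> S"
      then obtain U where U: "U \<subseteq> \<B>" "S = \<Union>U" using B(3) by blast
      then obtain C where C: "C \<in> U" "y \<in> C" using AS by blast
      have "C \<inter> torus \<noteq> {}" using C y by blast
      moreover have "x \<in> D C" using x C U unfolding G_def by blast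
      ultimately obtain n where "(f^^n) x \<in> C" unfolding D_def by auto
      then have "(f^^n) x \<in> A" using C U AS by blast
      then show "range (\<lambda>n. (f ^^ n) x) \<inter> A \<noteq> {}" by blast
    qed
  qed
  then show ?thesis unfolding torus_transitive_def using xt by blast
qed

lemma back_inv:
  assumes endo: "torus_endomorphism f" and inv: "f -` U \<inter> torus = U"
  shows "x \<in> torus \<Longrightarrow> (f^^n) x \<in> U \<Longrightarrow> x \<in> U"
proof (induction n arbitrary: x)
  case 0 then show ?case by simp
next
  case (Suc n)
  have "f x \<in> torus" using Suc.prems endo unfolding torus_endomorphism_def by blast
  moreover have "(f^^n) (f x) \<in> U" using Suc.prems by (simp add: funpow_Suc_right del: funpow.simps)
  ultimately have "f x \<in> U" using Suc.IH by blast
  then show ?case using inv Suc.prems by blast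
qed

theorem proposition1:
  fixes f :: "complex \<times> complex \<Rightarrow> complex \<times> complex"
  assumes "torus_endomorphism f" and "area_preserving f"
  shows "\<not> torus_transitive f \<longleftrightarrow>
    (\<exists>U V. U \<noteq> {} \<and> V \<noteq> {} \<and> regular_open U \<and> regular_open V \<and>
       U = torus - torus_top closure_of V \<and>
       f -` U \<inter> torus = U \<and> f -` V \<inter> torus = V)"
proof
  assume nt: "\<not> torus_transitive f"
  obtain U0 V0 where UV: "openin torus_top U0" "U0 \<noteq> {}" "openin torus_top V0" "V0 \<noteq> {}"
    and wand: "\<And>n x. x \<in> V0 \<Longrightarrow> (f^^n) x \<notin> U0"
  proof -
    have "\<not> (\<forall>U0 V0. openin torus_top U0 \<longrightarrow> U0 \<noteq> {} \<longrightarrow> openin torus_top V0 \<longrightarrow> V0 \<noteq> {}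
       \<longrightarrow> (\<exists>n x. x \<in> V0 \<and> (f^^n) x \<in> U0))"
    proof
      assume h: "\<forall>U0 V0. openin torus_top U0 \<longrightarrow> U0 \<noteq> {} \<longrightarrow> openin torus_top V0 \<longrightarrow> V0 \<noteq> {}
       \<longrightarrow> (\<exists>n x. x \<in> V0 \<and> (f^^n) x \<in> U0)"
      have "torus_transitive f"
        by (rule baire_part[OF assms(1)]) (use h in simp)
      then show False using nt by contradiction
    qed
    then show ?thesis using that by auto
  qed
  have "\<exists>U V. U \<noteq> {} \<and> V \<noteq> {} \<and> openin torus_top U \<and> U = torus_top interior_of (torus_top closure_of U)
     \<and> openin torus_top V \<and> V = torus_top interior_of (torus_top closure_of V) \<and> U = topspace torus_top - torus_top closure_of V
     \<and> {x\<in>topspace torus_top. f x \<in> U} = U \<and> {x\<in>topspace torus_top. f x \<in> V} = V"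
  proof (rule abstract_part[OF endo_cont[OF assms(1)] endo_open[OF assms(1)] _ UV wand])
    fix W assume "openin torus_top W" "{x \<in> topspace torus_top. f x \<in> W} \<subseteq> W"
    then show "W \<subseteq> torus_top closure_of {x \<in> topspace torus_top. f x \<in> W}"
      using measure_prop[OF assms] by simp
  qed
  then obtain U V where R: "U \<noteq> {}" "V \<noteq> {}" "openin torus_top U" "U = torus_top interior_of (torus_top closure_of U)"
     "openin torus_top V" "V = torus_top interior_of (torus_top closure_of V)" "U = topspace torus_top - torus_top closure_of V"
     "{x\<in>topspace torus_top. f x \<in> U} = U" "{x\<in>topspace torus_top. f x \<in> V} = V" by (elim exE conjE) (rule that; assumption)
  have e: "\<And>U. {x\<in>torus. f x \<in> U} = f -` U \<inter> torus" by auto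
  have rU: "regular_open U" unfolding regular_open_def using R(3) R(4) by (rule conjI)
  have rV: "regular_open V" unfolding regular_open_def using R(5) R(6) by (rule conjI)
  have cU: "U = torus - torus_top closure_of V" using R(7) by simp
  have fU: "f -` U \<inter> torus = U" using R(8) e by simp
  have fV: "f -` V \<inter> torus = V" using R(9) e by simp
  show "\<exists>U V. U \<noteq> {} \<and> V \<noteq> {} \<and> regular_open U \<and> regular_open V \<and>
       U = torus - torus_top closure_of V \<and>
       f -` U \<inter> torus = U \<and> f -` V \<inter> torus = V"
    by (rule exI[of _ U], rule exI[of _ V]) (intro conjI R(1) R(2) rU rV cU fU fV)
next
  assume "\<exists>U V. U \<noteq> {} \<and> V \<noteq> {} \<and> regular_open U \<and> regular_open V \<and>
       U = torus - torus_top closure_of V \<and>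
       f -` U \<inter> torus = U \<and> f -` V \<inter> torus = V"
  then obtain U V where UV: "U \<noteq> {}" "V \<noteq> {}" "regular_open U" "regular_open V"
       "U = torus - torus_top closure_of V" "f -` U \<inter> torus = U" "f -` V \<inter> torus = V" by blast
  show "\<not> torus_transitive f"
  proof
    assume "torus_transitive f"
    then obtain x where x: "x \<in> torus" "torus \<subseteq> closure (range (\<lambda>n. (f ^^ n) x))"
      unfolding torus_transitive_def by blast
    have hit: "x \<in> A" if A: "openin torus_top A" "A \<noteq> {}" "f -` A \<inter> torus = A" for A
    proof -
      obtain T where T: "open T" "A = torus \<inter> T" using A(1) openin_open by blast
      obtain a where a: "a \<in> A" using A(2) by blast
      then have "a \<in> closure (range (\<lambda>n. (f ^^ n) x))" using x T by blast
      then have "range (\<lambda>n. (f ^^ n) x) \<inter> T \<noteq> {}"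
        unfolding closure_iff_nhds_not_empty using T a by blast
      then obtain n where "(f^^n) x \<in> T" by blast
      moreover have "(f^^n) x \<in> torus" using iter_in[OF assms(1) x(1)] .
      ultimately have "(f^^n) x \<in> A" using T by blast
      then show ?thesis using back_inv[OF assms(1) A(3) x(1)] by blast
    qed
    have oU: "openin torus_top U" using UV(3)[unfolded regular_open_def, THEN conjunct1] .
    have oV: "openin torus_top V" using UV(4)[unfolded regular_open_def, THEN conjunct1] .
    have "x \<in> U" by (rule hit[OF oU UV(1) UV(6)])
    moreover have "x \<in> V" by (rule hit[OF oV UV(2) UV(7)])
    moreover have "V \<subseteq> torus_top closure_of V"
      by (rule closure_of_subset) (use openin_subset[OF oV] in simp)
    ultimately show False using UV(5) by blast
  qed
qed

end
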